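(* Let $w = 1+z$. Then, as formal power series in $x$ whose coefficients are polynomials in $z$, $$\sum_{n \ge 0} F_{n,n}(z)\, x^n \;=\; \frac{1}{\sqrt{(wx+1)^2 - 4w^2 x}}.$$ Here the square root is the formal power series in $x$ with constant term $1$.
   Context: Let $\mathbb{N} = \{0,1,2,\dots\}$. For $(p,q) \in \mathbb{N}^2$ and $n \in \mathbb{N}$, an unrestricted generalized jump path of length $n$ starting at $(p,q)$ is a sequence $(x_0, \dots, x_n)$ of points of $\mathbb{N}^2$ satisfying three conditions: - $x_0 = (p,q)$; - for every $i$, each coordinate of $x_{i+1}$ is at most the corresponding coordinate of $x_i$; - $x_{i+1} \ne x_i$ for every $i$. Let $u((p,q),n)$ denote the number of such paths, and define the polynomial $F_{p,q}(z) = \sum_{k=0}^{p+q} u((p,q),k)\, z^k$. *)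

theory Defs
  imports "HOL-Computational_Algebra.Polynomial" "HOL-Computational_Algebra.Formal_Power_Series"
begin

text \<open>Unrestricted generalized jump paths of length n starting at a point s of N^2,
  represented as lists [x_0, ..., x_n] of length n+1.\<close>
definition ugj_paths :: "nat \<times> nat \<Rightarrow> nat \<Rightarrow> (nat \<times> nat) list set" where
  "ugj_paths s n = {xs. length xs = Suc n \<and> xs ! 0 = s \<and>
     (\<forall>i<n. fst (xs ! Suc i) \<le> fst (xs ! i) \<and> snd (xs ! Suc i) \<le> snd (xs ! i)
            \<and> xs ! Suc i \<noteq> xs ! i)}"

definition u :: "nat \<times> nat \<Rightarrow> nat \<Rightarrow> nat" where
  "u s n = card (ugj_paths s n)"

definition F :: "nat \<Rightarrow> nat \<Rightarrow> int poly" where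
  "F p q = (\<Sum>k\<le>p+q. monom (int (u (p, q) k)) k)"

end

theory Submission
  imports Defs
begin


definition L :: "nat \<times> nat \<Rightarrow> (nat \<times> nat) set" where
  "L s = ({..fst s} \<times> {..snd s}) - {s}"

lemma L_finite: "finite (L s)" unfolding L_def by auto

lemma ugj0: "ugj_paths s 0 = {[s]}"
  unfolding ugj_paths_def by (auto simp: length_Suc_conv)

lemma ugjSuc: "ugj_paths s (Suc n) = (\<Union>t\<in>L s. (#) s ` ugj_paths t n)"
proof (intro equalityI subsetI)
  fix xs assume xs: "xs \<in> ugj_paths s (Suc n)"
  then obtain y ys where xs_eq: "xs = y # ys" and len: "length ys = Suc n"
    unfolding ugj_paths_def by (cases xs) auto
  have y: "y = s" using xs xs_eq unfolding ugj_paths_def by auto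
  have c: "\<forall>i<Suc n. fst (xs ! Suc i) \<le> fst (xs ! i) \<and> snd (xs ! Suc i) \<le> snd (xs ! i)
            \<and> xs ! Suc i \<noteq> xs ! i" using xs unfolding ugj_paths_def by auto
  have "ys ! 0 \<in> L s" using c[rule_format, of 0] unfolding xs_eq y L_def
    by (cases s; cases "ys!0") auto
  moreover have "ys \<in> ugj_paths (ys ! 0) n"
    unfolding ugj_paths_def using len c unfolding xs_eq by auto
  ultimately show "xs \<in> (\<Union>t\<in>L s. (#) s ` ugj_paths t n)" unfolding xs_eq y by blast
next
  fix xs assume "xs \<in> (\<Union>t\<in>L s. (#) s ` ugj_paths t n)"
  then obtain t ys where t: "t \<in> L s" and ys: "ys \<in> ugj_paths t n" and xs_eq: "xs = s # ys" by blast
  have len: "length ys = Suc n" and y0: "ys ! 0 = t"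
    and c: "\<forall>i<n. fst (ys ! Suc i) \<le> fst (ys ! i) \<and> snd (ys ! Suc i) \<le> snd (ys ! i)
            \<and> ys ! Suc i \<noteq> ys ! i" using ys unfolding ugj_paths_def by auto
  have t': "fst t \<le> fst s \<and> snd t \<le> snd s \<and> t \<noteq> s" using t unfolding L_def
    by (cases s; cases t) auto
  have "\<forall>i<Suc n. fst ((s # ys) ! Suc i) \<le> fst ((s # ys) ! i) \<and> snd ((s # ys) ! Suc i) \<le> snd ((s # ys) ! i)
            \<and> (s # ys) ! Suc i \<noteq> (s # ys) ! i"
  proof (intro allI impI)
    fix i assume i: "i < Suc n"
    show "fst ((s # ys) ! Suc i) \<le> fst ((s # ys) ! i) \<and> snd ((s # ys) ! Suc i) \<le> snd ((s # ys) ! i)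
            \<and> (s # ys) ! Suc i \<noteq> (s # ys) ! i"
    proof (cases i)
      case 0 then show ?thesis using t' y0 by auto
    next
      case (Suc j) then show ?thesis using c i by auto
    qed
  qed
  then show "xs \<in> ugj_paths s (Suc n)"
    unfolding ugj_paths_def xs_eq using len by auto
qed

lemma ugj_finite: "finite (ugj_paths s n)"
proof (induction n arbitrary: s)
  case 0 then show ?case by (simp add: ugj0)
next
  case (Suc n) then show ?case by (simp add: ugjSuc L_finite)
qed

lemma u0: "u s 0 = 1" by (simp add: u_def ugj0)

lemma uSuc: "u s (Suc n) = (\<Sum>t\<in>L s. u t n)"
proof -
  have "u s (Suc n) = card (\<Union>t\<in>L s. (#) s ` ugj_paths t n)" by (simp add: u_def ugjSuc)
  also have "\<dots> = (\<Sum>t\<in>L s. card ((#) s ` ugj_paths t n))"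
  proof (rule card_UN_disjoint)
    show "\<forall>i\<in>L s. \<forall>j\<in>L s. i \<noteq> j \<longrightarrow> (#) s ` ugj_paths i n \<inter> (#) s ` ugj_paths j n = {}"
      unfolding ugj_paths_def by auto
  qed (auto simp: L_finite ugj_finite)
  also have "\<dots> = (\<Sum>t\<in>L s. u t n)"
    by (rule sum.cong) (auto simp: u_def card_image)
  finally show ?thesis .
qed

lemma u_vanish: "fst s + snd s < n \<Longrightarrow> u s n = 0"
proof (induction n arbitrary: s)
  case 0 then show ?case by simp
next
  case (Suc n)
  have "u t n = 0" if "t \<in> L s" for t
  proof -
    have "fst t \<le> fst s" "snd t \<le> snd s" "t \<noteq> s" using that unfolding L_def by auto
    then have "fst t + snd t < fst s + snd s" by (cases s; cases t) auto
    then show ?thesis using Suc by auto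
  qed
  then show ?case by (simp add: uSuc)
qed



lemma coeff_F: "coeff (F p q) n = int (u (p, q) n)"
proof -
  have "coeff (F p q) n = (\<Sum>k\<le>p+q. if k = n then int (u (p,q) k) else 0)"
    unfolding F_def coeff_sum by (simp add: coeff_monom)
  also have "\<dots> = int (u (p,q) n)"
    using u_vanish[of "(p,q)" n] by auto
  finally show ?thesis .
qed

definition S :: "nat \<Rightarrow> nat \<Rightarrow> int poly" where
  "S p q = (\<Sum>a\<le>p. \<Sum>b\<le>q. F a b)"

lemma F_rec: "F p q = 1 + pCons 0 (\<Sum>t\<in>L (p,q). F (fst t) (snd t))"
proof (rule poly_eqI)
  fix n show "coeff (F p q) n = coeff (1 + pCons 0 (\<Sum>t\<in>L (p,q). F (fst t) (snd t))) n"
  proof (cases n)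
    case 0 then show ?thesis by (simp add: coeff_F u0)
  next
    case (Suc m)
    have "coeff (F p q) n = int (\<Sum>t\<in>L (p,q). u t m)" using Suc by (simp add: coeff_F uSuc)
    also have "\<dots> = (\<Sum>t\<in>L (p,q). coeff (F (fst t) (snd t)) m)"
      by (simp add: coeff_F)
    finally show ?thesis using Suc by (simp add: coeff_sum)
  qed
qed

lemma sumL: "(\<Sum>t\<in>L (p,q). F (fst t) (snd t)) = S p q - F p q"
proof -
  have "(\<Sum>t\<in>L (p,q). F (fst t) (snd t)) = (\<Sum>t\<in>{..p}\<times>{..q}. F (fst t) (snd t)) - F p q"
    unfolding L_def by (subst sum_diff1) auto
  also have "(\<Sum>t\<in>{..p}\<times>{..q}. F (fst t) (snd t)) = S p q"
    unfolding S_def by (simp add: sum.cartesian_product case_prod_beta)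
  finally show ?thesis .
qed

definition zz :: "int poly" where "zz = [:0,1:]"
definition ww :: "int poly" where "ww = [:1,1:]"
lemma ww_eq: "ww = 1 + zz" by (simp add: ww_def zz_def one_pCons)
lemma zz_mult: "pCons 0 X = zz * X" by (simp add: zz_def)

lemma wF: "ww * F p q = 1 + zz * S p q"
proof -
  have "F p q = 1 + zz * (S p q - F p q)"
    using F_rec[of p q] unfolding sumL zz_mult .
  then have "F p q + zz * F p q = 1 + zz * S p q" by (simp add: algebra_simps)
  moreover have "ww * F p q = F p q + zz * F p q" by (simp add: ww_eq algebra_simps)
  ultimately show ?thesis by simp
qed

lemma F00: "F 0 0 = 1"
  using wF[of 0 0] by (simp add: S_def ww_eq algebra_simps)

lemma F0Suc: "F 0 (Suc q) = ww * F 0 q"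
proof -
  have "S 0 (Suc q) = S 0 q + F 0 (Suc q)" by (simp add: S_def)
  then have "ww * F 0 (Suc q) - ww * F 0 q = zz * F 0 (Suc q)"
    using wF[of 0 "Suc q"] wF[of 0 q] by (simp add: algebra_simps)
  then show ?thesis by (simp add: ww_eq algebra_simps)
qed

lemma FSuc0: "F (Suc p) 0 = ww * F p 0"
proof -
  have "S (Suc p) 0 = S p 0 + F (Suc p) 0" by (simp add: S_def)
  then have "ww * F (Suc p) 0 - ww * F p 0 = zz * F (Suc p) 0"
    using wF[of "Suc p" 0] wF[of p 0] by (simp add: algebra_simps)
  then show ?thesis by (simp add: ww_eq algebra_simps)
qed

lemma FSucSuc: "F (Suc p) (Suc q) = ww * (F p (Suc q) + F (Suc p) q - F p q)"
proof -
  have "S (Suc p) (Suc q) - S p (Suc q) - S (Suc p) q + S p q = F (Suc p) (Suc q)"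
    by (simp add: S_def sum.distrib algebra_simps)
  then have "zz * (S (Suc p) (Suc q) - S p (Suc q) - S (Suc p) q + S p q) = zz * F (Suc p) (Suc q)"
    by simp
  then have "ww * F (Suc p) (Suc q) - ww * F p (Suc q) - ww * F (Suc p) q + ww * F p q
      = zz * F (Suc p) (Suc q)"
    using wF[of "Suc p" "Suc q"] wF[of p "Suc q"] wF[of "Suc p" q] wF[of p q]
    by (simp add: algebra_simps)
  then show ?thesis by (simp add: ww_eq algebra_simps)
qed



lemma coeff_lin_0: "coeff ([:a,b:] * X) 0 = a * coeff X 0"
  by simp
lemma coeff_lin_Suc: "coeff ([:a,b:] * X) (Suc n) = a * coeff X (Suc n) + b * coeff X n"
  by (simp add: coeff_pCons)

definition T :: "nat \<Rightarrow> nat \<Rightarrow> int poly poly" where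
  "T p q = [:1,zz:]^p * [:1,ww:]^q"

definition E :: "nat \<Rightarrow> nat \<Rightarrow> int poly" where
  "E p q = ww^p * coeff (T p q) q"

lemma T0_coeff0: "coeff (T p 0) 0 = 1"
proof (induction p)
  case 0 then show ?case by (simp add: T_def)
next
  case (Suc p)
  have "T (Suc p) 0 = [:1,zz:] * T p 0" by (simp add: T_def)
  then show ?case using Suc by (simp add: coeff_lin_0)
qed

lemma deg_lin_pow: "degree ([:1,ww:]^q) \<le> q"
proof -
  have "degree ([:1,ww:]^q) \<le> degree [:1,ww:] * q" by (rule degree_power_le)
  also have "\<dots> \<le> q" by simp
  finally show ?thesis .
qed

lemma E00: "E 0 0 = 1" by (simp add: E_def T_def)

lemma ESuc0: "E (Suc p) 0 = ww * E p 0"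
  by (simp add: E_def T0_coeff0)

lemma E0Suc: "E 0 (Suc q) = ww * E 0 q"
proof -
  have "coeff ([:1,ww:]^q) (Suc q) = 0"
    using deg_lin_pow[of q] by (simp add: coeff_eq_0)
  then have "coeff ([:1,ww:] * [:1,ww:]^q) (Suc q) = ww * coeff ([:1,ww:]^q) q"
    by (simp add: coeff_lin_Suc)
  then show ?thesis by (simp add: E_def T_def)
qed

lemma Q_ident: "[:1,zz:] * [:1,ww:] = [:1,ww:] + [:0, ww:] * [:1,zz:] - [:0,1::int poly:]"
  by (simp add: ww_eq algebra_simps)

lemma ESucSuc: "E (Suc p) (Suc q) = ww * (E p (Suc q) + E (Suc p) q - E p q)"
proof -
  define X where "X = T p q"
  have T11: "T (Suc p) (Suc q) = [:1,zz:] * [:1,ww:] * X" unfolding T_def X_def by (simp only: power_Suc) (simp only: ac_simps)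
  have T01: "T p (Suc q) = [:1,ww:] * X" by (simp add: T_def X_def algebra_simps)
  have T10: "T (Suc p) q = [:1,zz:] * X" by (simp add: T_def X_def algebra_simps)
  have "T (Suc p) (Suc q) = [:1,ww:] * X + pCons 0 (smult ww ([:1,zz:] * X)) - pCons 0 X"
  proof -
    have a: "[:0,ww:] * Y = pCons 0 (smult ww Y)" for Y :: "int poly poly" by simp
    have b: "[:0,1:] * Y = pCons 0 Y" for Y :: "int poly poly" by simp
    have "T (Suc p) (Suc q) = [:1,ww:] * X + [:0, ww:] * ([:1,zz:] * X) - [:0,1:] * X"
      unfolding T11 Q_ident by (simp only: algebra_simps)
    then show ?thesis unfolding a b .
  qed
  then have "coeff (T (Suc p) (Suc q)) (Suc q) = coeff (T p (Suc q)) (Suc q) + ww * coeff (T (Suc p) q) q - coeff X q"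
    unfolding T01 T10 by simp
  then have "ww * ww^p * coeff (T (Suc p) (Suc q)) (Suc q) = ww * ww^p * (coeff (T p (Suc q)) (Suc q) + ww * coeff (T (Suc p) q) q - coeff X q)"
    by simp
  then show ?thesis unfolding E_def X_def by (simp add: algebra_simps)
qed

lemma F_eq_E: "F p q = E p q"
proof (induction p arbitrary: q)
  case 0
  show ?case by (induction q) (simp_all add: F00 E00 F0Suc E0Suc)
next
  case (Suc p)
  note IHp = Suc.IH
  show ?case
  proof (induction q)
    case 0 then show ?case using IHp by (simp add: FSuc0 ESuc0)
  next
    case (Suc q) then show ?case using IHp by (simp add: FSucSuc ESucSuc)
  qed
qed



lemma coeff_quad_0: "coeff ([:a,b,c:] * X) 0 = a * coeff X 0"
  by simp
lemma coeff_quad_1: "coeff ([:a,b,c:] * X) (Suc 0) = a * coeff X (Suc 0) + b * coeff X 0"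
  by (simp add: coeff_pCons)
lemma coeff_quad_SS: "coeff ([:a,b,c:] * X) (Suc (Suc j)) = a * coeff X (Suc (Suc j)) + b * coeff X (Suc j) + c * coeff X j"
  by (simp add: coeff_pCons algebra_simps)

context
  fixes t c :: "'a :: {idom, ring_char_0}"
begin

definition rr :: "nat \<Rightarrow> nat \<Rightarrow> 'a" where
  "rr n j = coeff ([:1,t,c:]^n) j"

lemma R1: "rr (Suc n) (Suc (Suc j)) = rr n (Suc (Suc j)) + t * rr n (Suc j) + c * rr n j"
  unfolding rr_def by (simp only: power_Suc coeff_quad_SS) simp

lemma deriv_id: "[:1,t,c:] * pderiv ([:1,t,c:]^n) = smult (of_nat n) ([:1,t,c:]^n) * [:t, 2*c:]"
proof (cases n)
  case 0 then show ?thesis by simp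
next
  case (Suc m)
  have "pderiv [:1,t,c:] = [:t, 2*c:]" by (simp add: pderiv_pCons)
  then show ?thesis unfolding Suc pderiv_power_Suc
    by (simp only: power_Suc mult_smult_left mult_smult_right mult.assoc)
qed

lemma Eq: "of_nat (j+2) * rr n (j+2) + of_nat (j+1) * t * rr n (j+1) + of_nat j * c * rr n j
   = of_nat n * t * rr n (j+1) + 2 * of_nat n * c * rr n j"
proof -
  have h: "coeff ([:1,t,c:] * pderiv ([:1,t,c:]^n)) (Suc j) = coeff ([:t, 2*c:] * smult (of_nat n) ([:1,t,c:]^n)) (Suc j)"
    using deriv_id[of n] by (simp add: mult.commute)
  show ?thesis
  proof (cases j)
    case 0
    show ?thesis using h unfolding 0 coeff_quad_1 coeff_lin_Suc
      by (simp add: coeff_pderiv rr_def algebra_simps numeral_2_eq_2)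
  next
    case (Suc i)
    show ?thesis using h unfolding Suc coeff_quad_SS coeff_lin_Suc
      by (simp add: coeff_pderiv rr_def algebra_simps numeral_2_eq_2)
  qed
qed

lemma cancel_nat: "of_nat (Suc k) * (x::'a) = of_nat (Suc k) * y \<Longrightarrow> x = y"
  by (metis mult_left_cancel of_nat_eq_0_iff nat.distinct(1))

lemma rec_main: "of_nat (k+3) * rr (k+3) (k+3) = of_nat (2*k+5) * t * rr (k+2) (k+2) - of_nat (k+2) * (t^2 - 4*c) * rr (k+1) (k+1)"
proof -
  define K where "K = (of_nat k :: 'a)"
  define s0 where "s0 = rr (k+1) k"
  define s1 where "s1 = rr (k+1) (k+1)"
  define s2 where "s2 = rr (k+1) (k+2)"
  define s3 where "s3 = rr (k+1) (k+3)"
  define B1 where "B1 = rr (k+2) (k+1)"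
  define B2 where "B2 = rr (k+2) (k+2)"
  define B3 where "B3 = rr (k+2) (k+3)"
  define b3 where "b3 = rr (k+3) (k+3)"
  have e1': "(K+2) * s2 + (K+1) * t * s1 + K * c * s0 = (K+1) * t * s1 + 2 * (K+1) * c * s0"
    using Eq[of k "k+1"] unfolding s0_def s1_def s2_def K_def by (simp add: algebra_simps)
  have "of_nat (Suc (Suc k)) * s2 = of_nat (Suc (Suc k)) * (c * s0)"
    using e1' unfolding K_def by (simp add: algebra_simps)
  then have e1: "s2 = c * s0" by (rule cancel_nat)
  have e2: "(K+3) * s3 + (K+2) * t * s2 + (K+1) * c * s1 = (K+1) * t * s2 + 2 * (K+1) * c * s1"
    using Eq[of "k+1" "k+1"] unfolding s1_def s2_def s3_def K_def by (simp add: algebra_simps numeral_3_eq_3)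
  have e3': "(K+3) * B3 + (K+2) * t * B2 + (K+1) * c * B1 = (K+2) * t * B2 + 2 * (K+2) * c * B1"
    using Eq[of "k+1" "k+2"] unfolding B1_def B2_def B3_def K_def by (simp add: algebra_simps numeral_3_eq_3)
  have "of_nat (Suc (Suc (Suc k))) * B3 = of_nat (Suc (Suc (Suc k))) * (c * B1)"
    using e3' unfolding K_def by (simp add: algebra_simps numeral_3_eq_3)
  then have e3: "B3 = c * B1" by (rule cancel_nat)
  have e4: "B2 = s2 + t * s1 + c * s0"
    using R1[of "k+1" k] unfolding B2_def s0_def s1_def s2_def by (simp add: algebra_simps)
  have e5: "B3 = s3 + t * s2 + c * s1"
    using R1[of "k+1" "k+1"] unfolding B3_def s3_def s1_def s2_def by (simp add: algebra_simps numeral_3_eq_3)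
  have e6: "b3 = B3 + t * B2 + c * B1"
    using R1[of "k+2" "k+1"] unfolding b3_def B1_def B2_def B3_def by (simp add: algebra_simps numeral_3_eq_3)
  have goal: "(K+3) * b3 = (2*K+5) * t * B2 - (K+2) * (t^2 - 4*c) * s1"
    using e1 e2 e3 e4 e5 e6 by algebra
  then show ?thesis unfolding K_def b3_def B2_def s1_def by simp
qed

lemma rr00: "rr 0 0 = 1" by (simp add: rr_def)
lemma rr11: "rr (Suc 0) (Suc 0) = t" by (simp add: rr_def)
lemma rr22: "rr (Suc (Suc 0)) (Suc (Suc 0)) = t^2 + 2*c"
  using R1[of 0 0] by (simp add: rr_def power2_eq_square algebra_simps numeral_2_eq_2)

lemma rec_all: "of_nat (m+2) * rr (m+2) (m+2) = of_nat (2*m+3) * t * rr (m+1) (m+1) - of_nat (m+1) * (t^2 - 4*c) * rr m m"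
proof (cases m)
  case 0 then show ?thesis by (simp add: rr22 rr11 rr00 algebra_simps power2_eq_square)
next
  case (Suc k)
  then show ?thesis using rec_main[of k] by (simp add: algebra_simps numeral_3_eq_3)
qed

end


abbreviation tt :: "int poly" where "tt \<equiv> zz + ww"
abbreviation cc :: "int poly" where "cc \<equiv> zz * ww"

lemma d_one: "tt^2 - 4*cc = 1"
  by (simp add: ww_eq power2_eq_square algebra_simps)

lemma Fnn: "F n n = ww^n * rr tt cc n n"
proof -
  have "[:1,zz:] * [:1,ww:] = [:1, tt, cc:]" by (simp add: algebra_simps)
  then have "T n n = [:1, tt, cc:]^n" unfolding T_def by (metis power_mult_distrib)
  then show ?thesis by (simp add: F_eq_E E_def rr_def)
qed

definition a :: "nat \<Rightarrow> int poly" where "a n = F n n"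

lemma a0: "a 0 = 1" by (simp add: a_def F00)
lemma a1: "a 1 = tt * ww"
  using Fnn[of 1] rr11[where t=tt and c=cc] by (simp add: a_def)

lemma a_rec: "of_nat (m+2) * a (m+2) = of_nat (2*m+3) * tt * ww * a (m+1) - of_nat (m+1) * ww^2 * a m"
proof -
  have r: "of_nat (m+2) * rr tt cc (m+2) (m+2) = of_nat (2*m+3) * tt * rr tt cc (m+1) (m+1) - of_nat (m+1) * rr tt cc m m"
    using rec_all[where t=tt and c=cc and m=m] unfolding d_one by simp
  define P where "P = ww^m"
  define b2 where "b2 = rr tt cc (m+2) (m+2)"
  define b1 where "b1 = rr tt cc (m+1) (m+1)"
  define b0 where "b0 = rr tt cc m m"
  have p2: "ww^(m+2) = P * ww^2" unfolding P_def by (simp only: power_add)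
  have p1: "ww^(m+1) = P * ww" unfolding P_def by simp
  have r': "of_nat (m+2) * b2 = of_nat (2*m+3) * tt * b1 - of_nat (m+1) * b0"
    using r unfolding b0_def b1_def b2_def .
  have "of_nat (m+2) * (P * ww^2 * b2) = P * ww^2 * (of_nat (m+2) * b2)"
    by (simp only: mult_ac)
  also have "\<dots> = P * ww^2 * (of_nat (2*m+3) * tt * b1 - of_nat (m+1) * b0)"
    unfolding r' ..
  also have "\<dots> = of_nat (2*m+3) * tt * ww * (P * ww * b1) - of_nat (m+1) * ww^2 * (P * b0)"
    by (simp add: algebra_simps power2_eq_square)
  finally show ?thesis unfolding a_def Fnn p2 p1 b0_def b1_def b2_def P_def[symmetric] .
qed

lemma a_rec3: "of_nat (k+3) * a (k+3) = of_nat (2*k+5) * tt * ww * a (k+2) - of_nat (k+2) * ww^2 * a (k+1)"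
proof -
  have e: "k+1+2 = k+3" "2*(k+1)+3 = 2*k+5" "k+1+1 = k+2" by simp_all
  show ?thesis using a_rec[of "k+1"] unfolding e .
qed

lemma keyK:
  fixes K a3 a2 a1 :: "int poly"
  assumes r: "(K+3)*a3 = (2*K+5)*tt*ww*a2 - (K+2)*ww^2*a1"
  shows "2 * ((K+3) * a3) + 2 * (- 2 * tt * ww) * ((K+2) * a2) + 2 * ww^2 * ((K+1) * a1) + (- 2 * tt * ww) * a2 + 2 * ww^2 * a1 = 0"
proof -
  have "2 * ((K+3) * a3) + 2 * (- 2 * tt * ww) * ((K+2) * a2) + 2 * ww^2 * ((K+1) * a1) + (- 2 * tt * ww) * a2 + 2 * ww^2 * a1
     = 2 * ((K+3) * a3 - ((2*K+5) * tt * ww * a2 - (K+2) * ww^2 * a1))"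
    by (simp add: algebra_simps)
  then show ?thesis using r by simp
qed

lemma key0:
  fixes a2 a1 a0 :: "int poly"
  assumes r: "2*a2 = 3*tt*ww*a1 - ww^2*a0"
  shows "2*(2*a2) + 2*(- 2*tt*ww)*a1 + (- 2*tt*ww)*a1 + 2*ww^2*a0 = 0"
proof -
  have "2*(2*a2) + 2*(- 2*tt*ww)*a1 + (- 2*tt*ww)*a1 + 2*ww^2*a0 = 2 * (2*a2 - (3*tt*ww*a1 - ww^2*a0))"
    by (simp add: algebra_simps)
  then show ?thesis using r by simp
qed

theorem mainTheorem6:
  fixes w :: "int poly" and D :: "int poly fps"
  assumes "w = [:1, 1:]"
    and "D = (fps_const w * fps_X + 1)\<^sup>2 - fps_const (4 * w\<^sup>2) * fps_X"
  shows "\<exists>S :: int poly fps. fps_nth S 0 = 1 \<and> S\<^sup>2 = D \<and>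
           Abs_fps (\<lambda>n. F n n) * S = 1"
proof -
  have w: "w = ww" using assms(1) by (simp add: ww_def)
  define \<alpha> where "\<alpha> = - 2 * tt * ww"
  define \<beta> where "\<beta> = ww^2"
  have tt_eq: "tt = 2 * ww - 1" by (simp add: ww_eq algebra_simps)
  have D: "D = 1 + fps_const \<alpha> * fps_X + fps_const \<beta> * fps_X^2"
  proof -
    have c1: "fps_const (4*ww^2) = 4 * fps_const ww ^ 2" by (simp add: numeral_fps_const)
    have c2: "fps_const \<alpha> = 2*fps_const ww - 4 * fps_const ww^2"
      by (simp add: numeral_fps_const \<alpha>_def ww_eq algebra_simps power2_eq_square)
    have c3: "fps_const \<beta> = fps_const ww ^ 2" by (simp add: \<beta>_def)
    show ?thesis unfolding assms(2) w c1 c2 c3 by (simp add: power2_eq_square algebra_simps)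
  qed
  define A where "A = Abs_fps a"
  have A: "Abs_fps (\<lambda>n. F n n) = A" unfolding A_def a_def ..
  have dD: "fps_deriv D = fps_const \<alpha> + fps_const (2 * \<beta>) * fps_X"
    unfolding D by (simp add: power2_eq_square algebra_simps numeral_fps_const)
  define G where "G = 2 * fps_deriv A * D + A * fps_deriv D"
  have G0: "G = 0"
  proof (rule fps_ext)
    fix n
    have G_eq: "G = 2 * fps_deriv A + fps_const (2*\<alpha>) * (fps_X * fps_deriv A)
        + fps_const (2*\<beta>) * (fps_X^2 * fps_deriv A) + fps_const \<alpha> * A + fps_const (2*\<beta>) * (fps_X * A)"
      unfolding G_def dD unfolding D by (simp add: algebra_simps numeral_fps_const)
    have Gn: "fps_nth G n = 2 * (of_nat (n+1) * a (n+1))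
        + (if n = 0 then 0 else 2 * \<alpha> * (of_nat n * a n))
        + (if n < 2 then 0 else 2 * \<beta> * (of_nat (n-1) * a (n-1)))
        + \<alpha> * a n + (if n = 0 then 0 else 2 * \<beta> * a (n-1))"
      unfolding G_eq fps_add_nth fps_mult_left_const_nth fps_X_power_mult_nth fps_X_mult_nth
      by (simp add: A_def numeral_fps_const Suc_diff_Suc numeral_2_eq_2)
    show "fps_nth G n = fps_nth 0 n"
    proof (cases n)
      case 0 then show ?thesis using Gn a0 a1 by (simp add: \<alpha>_def algebra_simps)
    next
      case (Suc m)
      show ?thesis
      proof (cases m)
        case 0
        have r: "2 * a (Suc (Suc 0)) = 3 * tt * ww * a (Suc 0) - ww^2 * a 0"
          using a_rec[of 0] by (simp add: numeral_2_eq_2)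
        have g: "fps_nth G n = 2 * (2 * a (Suc (Suc 0))) + 2 * \<alpha> * a (Suc 0) + \<alpha> * a (Suc 0) + 2 * \<beta> * a 0"
          using Gn Suc 0 by (simp add: numeral_2_eq_2)
        have L0: "2 * (2 * a (Suc (Suc 0))) + 2 * \<alpha> * a (Suc 0) + \<alpha> * a (Suc 0) + 2 * \<beta> * a 0 = 0"
          unfolding \<alpha>_def \<beta>_def by (rule key0[OF r])
        show ?thesis by (simp only: g L0 fps_zero_nth)
      next
        case (Suc k)
        have n: "n = k + 2" using Suc \<open>n = Suc m\<close> by simp
        define K where "K = (of_nat k :: int poly)"
        have g: "fps_nth G n = 2 * ((K+3) * a (k+3)) + 2 * \<alpha> * ((K+2) * a (k+2))
           + 2 * \<beta> * ((K+1) * a (k+1)) + \<alpha> * a (k+2) + 2 * \<beta> * a (k+1)"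
          using Gn unfolding n K_def by (simp add: numeral_3_eq_3 numeral_2_eq_2 add_ac)
        have r': "(K+3) * a (k+3) = (2*K+5) * tt * ww * a (k+2) - (K+2) * ww^2 * a (k+1)"
          using a_rec3[of k] unfolding K_def by simp
        have L0: "2 * ((K+3) * a (k+3)) + 2 * \<alpha> * ((K+2) * a (k+2))
           + 2 * \<beta> * ((K+1) * a (k+1)) + \<alpha> * a (k+2) + 2 * \<beta> * a (k+1) = 0"
          unfolding \<alpha>_def \<beta>_def by (rule keyK[OF r'])
        show ?thesis by (simp only: g L0 fps_zero_nth)
      qed
    qed
  qed
  have "fps_deriv (A * A * D) = A * G"
    unfolding G_def by (simp add: algebra_simps)
  then have "fps_deriv (A * A * D) = 0" using G0 by simp
  then have M: "A * A * D = fps_const (fps_nth (A * A * D) 0)" by (rule fps_deriv_eq_0_iff[THEN iffD1])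
  have h1: "fps_nth (A * A * D) 0 = 1" unfolding D A_def by (simp add: a0)
  have M1: "A * A * D = 1" using M unfolding h1 by simp
  show ?thesis
  proof (intro exI conjI)
    show "fps_nth (A * D) 0 = 1" unfolding D A_def by (simp add: a0)
    have "(A * D)^2 = (A * A * D) * D" by (simp add: power2_eq_square mult_ac)
    then show "(A * D)^2 = D" using M1 by simp
    show "Abs_fps (\<lambda>n. F n n) * (A * D) = 1" unfolding A using M1 by (simp only: mult.assoc)
  qed
qed

end
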